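(* Let $\lambda_1>\lambda_2>\dots>\lambda_n$ be integers (a regular dominant integral weight $\lambda$). An integer point $A$ of the Gelfand–Tsetlin polytope $GT_\lambda$ is a vertex of $GT_\lambda$ if and only if for every $1\le i\le n-1$ and $1\le j\le n-i$ the entry $A_{i,j}$ is equal to at least one of $A_{i-1,j}$ and $A_{i-1,j+1}$.
   Context: $GT_\lambda$ is the polytope in $\mathbb R^{n(n+1)/2}$, with coordinates $A_{i,j}$ for $0\le i\le n-1$, $1\le j\le n-i$, defined by $A_{0,j}=\lambda_j$ for all $j$ and $A_{i,j}\ge A_{i+1,j}\ge A_{i,j+1}$ for all $0\le i\le n-2$, $1\le j\le n-i-1$. *)

theory Defs
  imports "HOL-Analysis.Analysis"
begin

text \<open>Points of R^{n(n+1)/2} are encoded as functions A :: nat => nat => real, where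
  only the coordinates A i j with i < n and 1 <= j <= n - i are genuine; all other
  entries are required to be 0 (so the set is an affine copy of the polytope).\<close>

definition gt_index :: "nat \<Rightarrow> nat \<Rightarrow> nat \<Rightarrow> bool" where
  "gt_index n i j \<longleftrightarrow> i < n \<and> 1 \<le> j \<and> j \<le> n - i"

definition GT :: "nat \<Rightarrow> (nat \<Rightarrow> int) \<Rightarrow> (nat \<Rightarrow> nat \<Rightarrow> real) set" where
  "GT n lam = {A.
     (\<forall>i j. \<not> gt_index n i j \<longrightarrow> A i j = 0) \<and>
     (\<forall>j. 1 \<le> j \<and> j \<le> n \<longrightarrow> A 0 j = real_of_int (lam j)) \<and>
     (\<forall>i j. i + 2 \<le> n \<and> 1 \<le> j \<and> j + 1 \<le> n - i \<longrightarrow>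
        A i j \<ge> A (i+1) j \<and> A (i+1) j \<ge> A i (j+1))}"

definition is_vertex :: "(nat \<Rightarrow> nat \<Rightarrow> real) set \<Rightarrow> (nat \<Rightarrow> nat \<Rightarrow> real) \<Rightarrow> bool" where
  "is_vertex P A \<longleftrightarrow> A \<in> P \<and>
     \<not> (\<exists>B\<in>P. \<exists>C\<in>P. \<exists>t::real. B \<noteq> C \<and> 0 < t \<and> t < 1 \<and>
          A = (\<lambda>i j. t * B i j + (1 - t) * C i j))"

end

theory Submission
  imports Defs
begin


lemma gt_col:
  assumes "A \<in> GT n lam" "1 \<le> l" "k' + l \<le> n" "k \<le> k'"
  shows "A k' l \<le> A k l"
  using assms(4,3)
proof (induction k' rule: dec_induct)
  case base then show ?case by simp
next
  case (step m)
  have "A m l \<ge> A (m+1) l"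
    using assms(1,2) step.prems unfolding GT_def by auto
  then show ?case using step by simp
qed

lemma gt_diag:
  assumes "A \<in> GT n lam" "1 \<le> l"
  shows "k + d + l \<le> n \<Longrightarrow> A k (l + d) \<le> A (k + d) l"
proof (induction d arbitrary: k)
  case 0 then show ?case by simp
next
  case (Suc d)
  have "A (k+1) (l+d) \<ge> A k (l+d+1)"
    using assms Suc.prems unfolding GT_def by auto
  moreover have "A (k+1) (l+d) \<le> A (k+1+d) l" using Suc.IH[of "k+1"] Suc.prems by simp
  ultimately show ?case by simp
qed

lemma int_step:
  fixes x y a b :: real
  assumes "y \<le> x" "x \<in> \<int>" "y \<in> \<int>" "x = y \<Longrightarrow> a = b"
    "0 \<le> a" "a \<le> 1/2" "0 \<le> b" "b \<le> 1/2"
  shows "y + b \<le> x + a \<and> y - b \<le> x - a"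
proof (cases "x = y")
  case True then show ?thesis using assms by simp
next
  case False
  then have "y < x" using assms by simp
  obtain u where u: "x = of_int u" using assms(2) Ints_cases by blast
  obtain w where w: "y = of_int w" using assms(3) Ints_cases by blast
  have "w < u" using \<open>y < x\<close> u w by simp
  then have "w + 1 \<le> u" by simp
  then have "y + 1 \<le> x" using u w by (simp add: of_int_add[symmetric] del: of_int_add)
  then show ?thesis using assms by linarith
qed

lemma conv_eq:
  fixes a b c t :: real
  assumes "b \<le> a \<and> c \<le> a \<or> a \<le> b \<and> a \<le> c" "a = t * b + (1 - t) * c" "0 < t" "t < 1"
  shows "b = a \<and> c = a"
proof -
  have e: "t * (a - b) + (1 - t) * (a - c) = 0" using assms(2) by (simp add: algebra_simps)
  show ?thesis
  using assms(1)
  proof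
    assume h: "b \<le> a \<and> c \<le> a"
    have "t * (a - b) \<ge> 0" "(1 - t) * (a - c) \<ge> 0" using h assms by auto
    then have "t * (a - b) = 0" "(1 - t) * (a - c) = 0" using e by linarith+
    then show ?thesis using assms by auto
  next
    assume h: "a \<le> b \<and> a \<le> c"
    have "t * (a - b) \<le> 0" "(1 - t) * (a - c) \<le> 0" using h assms
      by (auto simp: mult_nonneg_nonpos)
    then have "t * (a - b) = 0" "(1 - t) * (a - c) = 0" using e by linarith+
    then show ?thesis using assms by auto
  qed
qed

lemma vertex_if:
  assumes inGT: "A \<in> GT n lam"
    and cond: "\<forall>i j. 1 \<le> i \<and> i \<le> n - 1 \<and> 1 \<le> j \<and> j \<le> n - i \<longrightarrow>
        A i j = A (i - 1) j \<or> A i j = A (i - 1) (j + 1)"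
  shows "is_vertex (GT n lam) A"
  unfolding is_vertex_def
proof (intro conjI notI)
  show "A \<in> GT n lam" by fact
  assume "\<exists>B\<in>GT n lam. \<exists>C\<in>GT n lam. \<exists>t::real. B \<noteq> C \<and> 0 < t \<and> t < 1 \<and>
          A = (\<lambda>i j. t * B i j + (1 - t) * C i j)"
  then obtain B C t where B: "B \<in> GT n lam" and C: "C \<in> GT n lam" and ne: "B \<noteq> C"
    and t: "0 < t" "t < 1" and Aeq: "A = (\<lambda>i j. t * B i j + (1 - t) * C i j)" by blast
  have Ak: "\<And>i j. A i j = t * B i j + (1 - t) * C i j" using Aeq by simp
  have eq: "\<forall>j. B i j = A i j \<and> C i j = A i j" for i
  proof (induction i)
    case 0
    show ?case
    proof
      fix j
      show "B 0 j = A 0 j \<and> C 0 j = A 0 j"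
      proof (cases "gt_index n 0 j")
        case True
        then show ?thesis using B C inGT unfolding GT_def gt_index_def by auto
      next
        case False
        then show ?thesis using B C inGT unfolding GT_def by auto
      qed
    qed
  next
    case (Suc i)
    show ?case
    proof
      fix j
      show "B (Suc i) j = A (Suc i) j \<and> C (Suc i) j = A (Suc i) j"
      proof (cases "gt_index n (Suc i) j")
        case False
        then show ?thesis using B C inGT unfolding GT_def by auto
      next
        case True
        then have idx: "1 \<le> j" "j \<le> n - Suc i" "Suc i < n" unfolding gt_index_def by auto
        have cB: "B i j \<ge> B (Suc i) j \<and> B (Suc i) j \<ge> B i (j+1)"
          using B idx unfolding GT_def by auto
        have cC: "C i j \<ge> C (Suc i) j \<and> C (Suc i) j \<ge> C i (j+1)"
          using C idx unfolding GT_def by auto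
        have "A (Suc i) j = A i j \<or> A (Suc i) j = A i (j + 1)"
          using cond[rule_format, of "Suc i" j] idx by simp
        then show ?thesis
        proof
          assume h: "A (Suc i) j = A i j"
          have "B (Suc i) j \<le> A (Suc i) j" "C (Suc i) j \<le> A (Suc i) j"
            using cB cC Suc.IH h by auto
          moreover have "A (Suc i) j = t * B (Suc i) j + (1 - t) * C (Suc i) j" by (rule Ak)
          ultimately show ?thesis using t conv_eq by blast
        next
          assume h: "A (Suc i) j = A i (j+1)"
          have "B (Suc i) j \<ge> A (Suc i) j" "C (Suc i) j \<ge> A (Suc i) j"
            using cB cC Suc.IH h by auto
          moreover have "A (Suc i) j = t * B (Suc i) j + (1 - t) * C (Suc i) j" by (rule Ak)
          ultimately show ?thesis using t conv_eq by blast
        qed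
      qed
    qed
  qed
  have "B = C" using eq by (intro ext) metis
  with ne show False by simp
qed

lemma not_vertex:
  assumes inGT: "A \<in> GT n lam"
    and integral: "\<forall>i j. A i j \<in> \<int>"
    and ij: "1 \<le> i" "i \<le> n - 1" "1 \<le> j" "j \<le> n - i"
    and ne1: "A i j \<noteq> A (i - 1) j" and ne2: "A i j \<noteq> A (i - 1) (j + 1)"
  shows "\<not> is_vertex (GT n lam) A"
proof
  assume vx: "is_vertex (GT n lam) A"
  have z: "\<forall>i j. \<not> gt_index n i j \<longrightarrow> A i j = 0"
    and top: "\<forall>j. 1 \<le> j \<and> j \<le> n \<longrightarrow> A 0 j = real_of_int (lam j)"
    and c: "\<forall>i j. i + 2 \<le> n \<and> 1 \<le> j \<and> j + 1 \<le> n - i \<longrightarrow>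
        A i j \<ge> A (i+1) j \<and> A (i+1) j \<ge> A i (j+1)"
    using inGT unfolding GT_def by auto
  define v where "v = A i j"
  have "A (i-1) j \<ge> A i j \<and> A i j \<ge> A (i-1) (j+1)"
  proof -
    have "i < n" using ij by linarith
    then have "i - 1 + 2 \<le> n \<and> 1 \<le> j \<and> j + 1 \<le> n - (i - 1)" using ij by linarith
    then show ?thesis using c[rule_format, of "i-1" j] ij by simp
  qed
  then have p1: "A (i-1) j > v" and p2: "A (i-1) (j+1) < v"
    using ne1 ne2 unfolding v_def by auto
  define T where "T k l \<longleftrightarrow> gt_index n k l \<and> i \<le> k \<and> l \<le> j \<and> j \<le> l + (k - i) \<and> A k l = v"
    for k l
  have T1: "T p q \<longleftrightarrow> T (p+1) q"
    if h: "p+2 \<le> n" "1 \<le> q" "q+1 \<le> n-p" "A p q = A (p+1) q" for p q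
  proof (cases "A p q = v")
    case False then show ?thesis using h unfolding T_def by auto
  next
    case True
    have g: "gt_index n p q" "gt_index n (p+1) q" using h unfolding gt_index_def by auto
    show ?thesis
    proof
      assume "T p q" then show "T (p+1) q" using g h unfolding T_def by auto
    next
      assume tp: "T (p+1) q"
      then have a: "i \<le> p+1" "q \<le> j" "j \<le> q + (p + 1 - i)" unfolding T_def by auto
      have "i \<le> p"
      proof (rule ccontr)
        assume "\<not> i \<le> p"
        then have "p = i - 1" "q = j" using a by auto
        then show False using True h p1 by simp
      qed
      moreover have "j \<le> q + (p - i)"
      proof (rule ccontr)
        assume "\<not> j \<le> q + (p - i)"
        then have jq: "j = q + (p - (i - 1))" using a \<open>i \<le> p\<close> ij(1) by auto
        have "A (i-1) (q + (p - (i-1))) \<le> A ((i-1) + (p - (i-1))) q"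
          using gt_diag[OF inGT h(2), of "i-1" "p - (i-1)"] h \<open>i \<le> p\<close> ij by simp
        then have "A (i-1) j \<le> A p q" using jq \<open>i \<le> p\<close> ij by simp
        then show False using True p1 by simp
      qed
      ultimately show "T p q" using g a True unfolding T_def by auto
    qed
  qed
  have T2: "T (p+1) q \<longleftrightarrow> T p (q+1)"
    if h: "p+2 \<le> n" "1 \<le> q" "q+1 \<le> n-p" "A (p+1) q = A p (q+1)" for p q
  proof (cases "A (p+1) q = v")
    case False then show ?thesis using h unfolding T_def by auto
  next
    case True
    have g: "gt_index n p (q+1)" "gt_index n (p+1) q" using h unfolding gt_index_def by auto
    show ?thesis
    proof
      assume "T p (q+1)" then show "T (p+1) q" using g h unfolding T_def by auto
    next
      assume tp: "T (p+1) q"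
      then have a: "i \<le> p+1" "q \<le> j" "j \<le> q + (p + 1 - i)" unfolding T_def by auto
      have "i \<le> p"
      proof (rule ccontr)
        assume "\<not> i \<le> p"
        then have "p = i - 1" "q = j" using a by auto
        then show False using True h p2 by simp
      qed
      moreover have "q + 1 \<le> j"
      proof (rule ccontr)
        assume "\<not> q + 1 \<le> j"
        then have jq: "q = j" using a by auto
        have "A p (j+1) \<le> A (i-1) (j+1)"
          using gt_col[OF inGT, of "j+1" p "i-1"] h jq \<open>i \<le> p\<close> by simp
        then show False using True h jq p2 by simp
      qed
      ultimately show "T p (q+1)" using g a True h unfolding T_def by auto
    qed
  qed
  define d where "d k l = (if T k l then (1/2::real) else 0)" for k l
  define B where "B = (\<lambda>k l. A k l + d k l)"
  define C where "C = (\<lambda>k l. A k l - d k l)"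
  have dT: "\<not> T k l \<Longrightarrow> d k l = 0" for k l unfolding d_def by simp
  have d01: "0 \<le> d k l" "d k l \<le> 1/2" for k l unfolding d_def by auto
  have cons: "A (p+1) q + d (p+1) q \<le> A p q + d p q \<and> A (p+1) q - d (p+1) q \<le> A p q - d p q
      \<and> A p (q+1) + d p (q+1) \<le> A (p+1) q + d (p+1) q \<and> A p (q+1) - d p (q+1) \<le> A (p+1) q - d (p+1) q"
    if h: "p+2 \<le> n" "1 \<le> q" "q+1 \<le> n-p" for p q
  proof -
    have cc: "A p q \<ge> A (p+1) q \<and> A (p+1) q \<ge> A p (q+1)" using c h by blast
    have "A (p+1) q + d (p+1) q \<le> A p q + d p q \<and> A (p+1) q - d (p+1) q \<le> A p q - d p q"
      by (rule int_step) (use cc integral d01 T1[OF h] in \<open>auto simp: d_def\<close>)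
    moreover have "A p (q+1) + d p (q+1) \<le> A (p+1) q + d (p+1) q \<and> A p (q+1) - d p (q+1) \<le> A (p+1) q - d (p+1) q"
      by (rule int_step) (use cc integral d01 T2[OF h] in \<open>auto simp: d_def\<close>)
    ultimately show ?thesis by blast
  qed
  have d0: "d 0 l = 0" for l using ij(1) unfolding d_def T_def by auto
  have dz: "\<not> gt_index n k l \<Longrightarrow> d k l = 0" for k l unfolding d_def T_def by auto
  have BG: "B \<in> GT n lam"
    unfolding GT_def B_def mem_Collect_eq
  proof (intro conjI allI impI)
    fix k l assume "\<not> gt_index n k l" then show "A k l + d k l = 0" using z dz by simp
  next
    fix l assume "1 \<le> l \<and> l \<le> n" then show "A 0 l + d 0 l = real_of_int (lam l)" using top d0 by simp
  next
    fix k l assume "k + 2 \<le> n \<and> 1 \<le> l \<and> l + 1 \<le> n - k"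
    then show "A (k + 1) l + d (k + 1) l \<le> A k l + d k l" "A k (l + 1) + d k (l + 1) \<le> A (k + 1) l + d (k + 1) l"
      using cons[of k l] by auto
  qed
  have CG: "C \<in> GT n lam"
    unfolding GT_def C_def mem_Collect_eq
  proof (intro conjI allI impI)
    fix k l assume "\<not> gt_index n k l" then show "A k l - d k l = 0" using z dz by simp
  next
    fix l assume "1 \<le> l \<and> l \<le> n" then show "A 0 l - d 0 l = real_of_int (lam l)" using top d0 by simp
  next
    fix k l assume "k + 2 \<le> n \<and> 1 \<le> l \<and> l + 1 \<le> n - k"
    then show "A (k + 1) l - d (k + 1) l \<le> A k l - d k l" "A k (l + 1) - d k (l + 1) \<le> A (k + 1) l - d (k + 1) l"
      using cons[of k l] by auto
  qed
  have Tij: "T i j" unfolding T_def v_def gt_index_def using ij by auto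
  have "B i j \<noteq> C i j" using Tij unfolding B_def C_def d_def by simp
  then have "B \<noteq> C" by auto
  moreover have "A = (\<lambda>k l. (1/2) * B k l + (1 - 1/2) * C k l)"
    unfolding B_def C_def by (auto simp: algebra_simps)
  ultimately show False using vx BG CG unfolding is_vertex_def
    by (metis half_gt_zero_iff less_numeral_extra(1) zero_less_one field_sum_of_halves
        add_less_same_cancel2 less_add_same_cancel1)
qed


theorem mainTheorem3:
  fixes n :: nat and lam :: "nat \<Rightarrow> int" and A :: "nat \<Rightarrow> nat \<Rightarrow> real"
  assumes regular: "\<forall>j. 1 \<le> j \<and> j < n \<longrightarrow> lam j > lam (j + 1)"
    and inGT: "A \<in> GT n lam"
    and integral: "\<forall>i j. A i j \<in> \<int>"
  shows "is_vertex (GT n lam) A \<longleftrightarrow>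
    (\<forall>i j. 1 \<le> i \<and> i \<le> n - 1 \<and> 1 \<le> j \<and> j \<le> n - i \<longrightarrow>
        A i j = A (i - 1) j \<or> A i j = A (i - 1) (j + 1))"
  using vertex_if[OF inGT] not_vertex[OF inGT integral] by blast

end
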